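(* Let $G$ be a finite group, let $\alpha\in\operatorname{Aut}G$, let $x,y\in G$, and let $m$ be a positive integer. Let $A=G\rtimes\langle\alpha\rangle$ be the semidirect product, with multiplication $(g,\alpha^i)(h,\alpha^j)=(g\,\alpha^i(h),\alpha^{i+j})$. Then there exists $z\in G$ with $$y\,\alpha(y)\cdots\alpha^{m-1}(y)=z^{-1}\,x\,\alpha(x)\cdots\alpha^{m-1}(x)\,\alpha^m(z)$$ if and only if the $m$-th powers of the elements $(x,\alpha)$ and $(y,\alpha)$ of $A$ are conjugate in $A$.
   Context: Here $\langle\alpha\rangle$ is the (finite cyclic) subgroup of $\operatorname{Aut}G$ generated by $\alpha$. The displayed condition says that the cocycles $\hat{\mathbb{Z}}\to G$ determined by $x\alpha(x)\cdots\alpha^{m-1}(x)$ and $y\alpha(y)\cdots\alpha^{m-1}(y)$ are cohomologous when $1\in\hat{\mathbb{Z}}$ acts on $G$ by $\alpha^m$. *)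

theory Defs
  imports "HOL-Algebra.Group"
begin

definition aut_pow :: "('a, 'b) monoid_scheme \<Rightarrow> ('a \<Rightarrow> 'a) \<Rightarrow> nat \<Rightarrow> ('a \<Rightarrow> 'a)" where
  "aut_pow G \<alpha> i = restrict (\<alpha> ^^ i) (carrier G)"

text \<open>The cyclic group \<langle>alpha\<rangle> is represented by the set of all powers alpha^i
  (restricted to the carrier), which is finite since G is finite.\<close>
definition semidirect_cyclic :: "('a, 'b) monoid_scheme \<Rightarrow> ('a \<Rightarrow> 'a) \<Rightarrow> ('a \<times> ('a \<Rightarrow> 'a)) monoid" where
  "semidirect_cyclic G \<alpha> =
     \<lparr> carrier = carrier G \<times> range (aut_pow G \<alpha>),
       mult = (\<lambda>(g, a) (h, b). (g \<otimes>\<^bsub>G\<^esub> a h, restrict (a \<circ> b) (carrier G))),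
       one = (\<one>\<^bsub>G\<^esub>, aut_pow G \<alpha> 0) \<rparr>"

fun twisted_prod :: "('a, 'b) monoid_scheme \<Rightarrow> ('a \<Rightarrow> 'a) \<Rightarrow> 'a \<Rightarrow> nat \<Rightarrow> 'a" where
  "twisted_prod G \<alpha> x 0 = \<one>\<^bsub>G\<^esub>"
| "twisted_prod G \<alpha> x (Suc n) = twisted_prod G \<alpha> x n \<otimes>\<^bsub>G\<^esub> (\<alpha> ^^ n) x"

definition conjugate_in :: "('c, 'd) monoid_scheme \<Rightarrow> 'c \<Rightarrow> 'c \<Rightarrow> bool" where
  "conjugate_in A u v \<longleftrightarrow> (\<exists>c\<in>carrier A. v = c \<otimes>\<^bsub>A\<^esub> u \<otimes>\<^bsub>A\<^esub> inv\<^bsub>A\<^esub> c)"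

end

theory Submission
  imports Defs "HOL-Library.FuncSet"
begin

locale twc = group G for G (structure) +
  fixes \<alpha> :: "'a \<Rightarrow> 'a"
  assumes iso: "\<alpha> \<in> iso G G" and fin: "finite (carrier G)"
begin

lemma a_closed: "a \<in> carrier G \<Longrightarrow> \<alpha> a \<in> carrier G"
  using iso by (auto simp: iso_def hom_def)

lemma a_mult: "a \<in> carrier G \<Longrightarrow> b \<in> carrier G \<Longrightarrow> \<alpha> (a \<otimes> b) = \<alpha> a \<otimes> \<alpha> b"
  using iso by (auto simp: iso_def hom_def)

lemma a_inj: "inj_on \<alpha> (carrier G)"
  using iso by (auto simp: iso_def bij_betw_def)

lemma a_one: "\<alpha> \<one> = \<one>"
proof -
  have "\<alpha> \<one> \<otimes> \<alpha> \<one> = \<alpha> \<one>" using a_mult[of \<one> \<one>] a_closed[of \<one>] by simp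
  then show ?thesis using a_closed[of \<one>] by simp
qed

lemma a_inv: "a \<in> carrier G \<Longrightarrow> \<alpha> (inv a) = inv (\<alpha> a)"
proof -
  assume a: "a \<in> carrier G"
  have "\<alpha> (inv a) \<otimes> \<alpha> a = \<one>" using a_mult[of "inv a" a] a a_one by simp
  then show ?thesis using a a_closed by (metis inv_closed inv_equality)
qed

lemma p_closed: "a \<in> carrier G \<Longrightarrow> (\<alpha> ^^ n) a \<in> carrier G"
  by (induct n) (auto simp: a_closed)

lemma p_mult: "a \<in> carrier G \<Longrightarrow> b \<in> carrier G \<Longrightarrow> (\<alpha> ^^ n) (a \<otimes> b) = (\<alpha> ^^ n) a \<otimes> (\<alpha> ^^ n) b"
  by (induct n) (auto simp: a_mult p_closed)

lemma p_one: "(\<alpha> ^^ n) \<one> = \<one>"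
  by (induct n) (auto simp: a_one)

lemma p_inv: "a \<in> carrier G \<Longrightarrow> (\<alpha> ^^ n) (inv a) = inv ((\<alpha> ^^ n) a)"
  by (induct n) (auto simp: a_inv p_closed)

lemma p_inj: "inj_on (\<alpha> ^^ n) (carrier G)"
proof (induct n)
  case 0 then show ?case by simp
next
  case (Suc n)
  have "inj_on (\<alpha> \<circ> (\<alpha> ^^ n)) (carrier G)"
    using Suc a_inj p_closed by (auto simp: inj_on_def)
  then show ?case by (simp only: funpow.simps)
qed

lemma ap_comp: "restrict (aut_pow G \<alpha> i \<circ> aut_pow G \<alpha> j) (carrier G) = aut_pow G \<alpha> (i + j)"
  by (rule ext) (auto simp: aut_pow_def p_closed funpow_add)

abbreviation "A \<equiv> semidirect_cyclic G \<alpha>"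

lemma A_mult: "h \<in> carrier G \<Longrightarrow>
  (g, aut_pow G \<alpha> i) \<otimes>\<^bsub>A\<^esub> (h, aut_pow G \<alpha> j) = (g \<otimes> (\<alpha> ^^ i) h, aut_pow G \<alpha> (i + j))"
  using ap_comp[of i j] by (simp add: semidirect_cyclic_def aut_pow_def)

lemma A_one: "\<one>\<^bsub>A\<^esub> = (\<one>, aut_pow G \<alpha> 0)"
  by (simp add: semidirect_cyclic_def)

lemma A_carrier: "carrier A = carrier G \<times> range (aut_pow G \<alpha>)"
  by (simp add: semidirect_cyclic_def)

lemma period: "\<exists>n>0. aut_pow G \<alpha> n = aut_pow G \<alpha> 0"
proof -
  have "range (aut_pow G \<alpha>) \<subseteq> carrier G \<rightarrow>\<^sub>E carrier G"
    by (auto simp: aut_pow_def p_closed)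
  then have "finite (range (aut_pow G \<alpha>))"
    using finite_PiE[of "carrier G" "\<lambda>_. carrier G"] fin finite_subset by blast
  then have "\<not> inj (aut_pow G \<alpha>)"
    using finite_imageD infinite_UNIV_nat by blast
  then obtain a b where ab: "a \<noteq> b" "aut_pow G \<alpha> a = aut_pow G \<alpha> b"
    by (auto simp: inj_def)
  then obtain a b where ab: "a < b" "aut_pow G \<alpha> a = aut_pow G \<alpha> b"
    by (metis linorder_neqE_nat)
  have "aut_pow G \<alpha> (b - a) = aut_pow G \<alpha> 0"
  proof (rule ext)
    fix x show "aut_pow G \<alpha> (b - a) x = aut_pow G \<alpha> 0 x"
    proof (cases "x \<in> carrier G")
      case True
      have "(\<alpha> ^^ a) ((\<alpha> ^^ (b - a)) x) = (\<alpha> ^^ b) x"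
        using ab(1) by (metis funpow_add le_add_diff_inverse less_imp_le o_apply)
      also have "\<dots> = (\<alpha> ^^ a) x" using ab(2) True by (metis aut_pow_def restrict_apply')
      finally have "(\<alpha> ^^ (b - a)) x = x"
        using p_inj[of a] True p_closed by (meson inj_onD)
      then show ?thesis using True by (simp add: aut_pow_def)
    qed (simp add: aut_pow_def)
  qed
  then show ?thesis using ab(1) by (intro exI[of _ "b - a"]) auto
qed

lemma A_group: "group A"
proof -
  obtain n where n: "n > 0" "aut_pow G \<alpha> n = aut_pow G \<alpha> 0" using period by blast
  have per: "aut_pow G \<alpha> (k * n) = aut_pow G \<alpha> 0" for k
  proof (induct k)
    case (Suc k)
    have "aut_pow G \<alpha> (Suc k * n) = restrict (aut_pow G \<alpha> n \<circ> aut_pow G \<alpha> (k * n)) (carrier G)"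
      using ap_comp[of n "k*n"] by simp
    also have "\<dots> = aut_pow G \<alpha> 0" using Suc n ap_comp[of 0 0] by simp
    finally show ?case .
  qed simp
  show ?thesis
  proof (rule groupI)
    fix u v assume "u \<in> carrier A" "v \<in> carrier A"
    then show "u \<otimes>\<^bsub>A\<^esub> v \<in> carrier A"
      by (auto simp: A_carrier A_mult p_closed)
  next
    show "\<one>\<^bsub>A\<^esub> \<in> carrier A" by (auto simp: A_carrier A_one)
  next
    fix u v w assume "u \<in> carrier A" "v \<in> carrier A" "w \<in> carrier A"
    then show "u \<otimes>\<^bsub>A\<^esub> v \<otimes>\<^bsub>A\<^esub> w = u \<otimes>\<^bsub>A\<^esub> (v \<otimes>\<^bsub>A\<^esub> w)"
      by (auto simp: A_carrier A_mult p_closed p_mult m_assoc funpow_add add.assoc)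
  next
    fix u assume "u \<in> carrier A"
    then show "\<one>\<^bsub>A\<^esub> \<otimes>\<^bsub>A\<^esub> u = u"
      by (auto simp: A_carrier A_mult A_one)
  next
    fix u assume "u \<in> carrier A"
    then obtain g i where u: "u = (g, aut_pow G \<alpha> i)" "g \<in> carrier G" by (auto simp: A_carrier)
    define j where "j = i * (n - 1)"
    have ij: "i + j = i * n" using n(1) by (cases n) (auto simp: j_def)
    have "(inv ((\<alpha> ^^ j) g), aut_pow G \<alpha> j) \<otimes>\<^bsub>A\<^esub> u = \<one>\<^bsub>A\<^esub>"
      using u p_closed per[of i] ij by (simp add: A_mult A_one add.commute mult.commute)
    moreover have "(inv ((\<alpha> ^^ j) g), aut_pow G \<alpha> j) \<in> carrier A"
      using u p_closed by (auto simp: A_carrier)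
    ultimately show "\<exists>y\<in>carrier A. y \<otimes>\<^bsub>A\<^esub> u = \<one>\<^bsub>A\<^esub>" by blast
  qed
qed

lemma tp_closed: "a \<in> carrier G \<Longrightarrow> twisted_prod G \<alpha> a n \<in> carrier G"
  by (induct n) (auto simp: p_closed)

lemma A_pow: "a \<in> carrier G \<Longrightarrow>
  (a, aut_pow G \<alpha> 1) [^]\<^bsub>A\<^esub> n = (twisted_prod G \<alpha> a n, aut_pow G \<alpha> n)"
  by (induct n) (auto simp: A_one A_mult)

lemma tp_shift: "a \<in> carrier G \<Longrightarrow> a \<otimes> \<alpha> (twisted_prod G \<alpha> a n) = twisted_prod G \<alpha> a n \<otimes> (\<alpha> ^^ n) a"
proof (induct n)
  case 0 then show ?case by (simp add: a_one)
next
  case (Suc n)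
  have e1: "\<alpha> (twisted_prod G \<alpha> a (Suc n)) = \<alpha> (twisted_prod G \<alpha> a n) \<otimes> (\<alpha> ^^ Suc n) a"
    using Suc tp_closed p_closed a_mult by simp
  have "a \<otimes> \<alpha> (twisted_prod G \<alpha> a (Suc n)) = (a \<otimes> \<alpha> (twisted_prod G \<alpha> a n)) \<otimes> (\<alpha> ^^ Suc n) a"
    unfolding e1 using Suc(2) tp_closed p_closed a_closed by (intro m_assoc[symmetric]) auto
  then show ?case using Suc by simp
qed

definition rel where "rel m a b \<longleftrightarrow> (\<exists>z\<in>carrier G. b = inv z \<otimes> a \<otimes> (\<alpha> ^^ m) z)"

lemma rel_trans: "a \<in> carrier G \<Longrightarrow> rel m a b \<Longrightarrow> rel m b c \<Longrightarrow> rel m a c"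
proof -
  assume a: "a \<in> carrier G" and "rel m a b" "rel m b c"
  then obtain z w where z: "z \<in> carrier G" "b = inv z \<otimes> a \<otimes> (\<alpha> ^^ m) z"
    and w: "w \<in> carrier G" "c = inv w \<otimes> b \<otimes> (\<alpha> ^^ m) w" by (auto simp: rel_def)
  have "c = inv (z \<otimes> w) \<otimes> a \<otimes> (\<alpha> ^^ m) (z \<otimes> w)"
    using z w a p_closed by (simp add: p_mult inv_mult_group m_assoc)
  then show "rel m a c" using z w by (auto simp: rel_def)
qed

lemma rel_a: "a \<in> carrier G \<Longrightarrow> rel m a b \<Longrightarrow> rel m (\<alpha> a) (\<alpha> b)"
proof -
  assume a: "a \<in> carrier G" and "rel m a b"
  then obtain z where z: "z \<in> carrier G" "b = inv z \<otimes> a \<otimes> (\<alpha> ^^ m) z" by (auto simp: rel_def)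
  have "\<alpha> ((\<alpha> ^^ m) z) = (\<alpha> ^^ m) (\<alpha> z)" by (simp add: funpow_swap1)
  then have "\<alpha> b = inv (\<alpha> z) \<otimes> \<alpha> a \<otimes> (\<alpha> ^^ m) (\<alpha> z)"
    using z a p_closed by (simp add: a_mult a_inv)
  then show ?thesis using z a_closed by (auto simp: rel_def)
qed

lemma rel_pow: "a \<in> carrier G \<Longrightarrow> rel m (twisted_prod G \<alpha> a m) ((\<alpha> ^^ k) (twisted_prod G \<alpha> a m))"
proof (induct k)
  case 0
  have "twisted_prod G \<alpha> a m = inv \<one> \<otimes> twisted_prod G \<alpha> a m \<otimes> (\<alpha> ^^ m) \<one>"
    using 0 tp_closed by (simp add: p_one)
  then show ?case unfolding rel_def funpow_0 by (rule bexI[OF _ one_closed])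
next
  case (Suc k)
  let ?P = "twisted_prod G \<alpha> a m"
  have "\<alpha> ?P = inv a \<otimes> ?P \<otimes> (\<alpha> ^^ m) a"
  proof -
    have "\<alpha> ?P = inv a \<otimes> (?P \<otimes> (\<alpha> ^^ m) a)"
      using tp_shift[of a m] Suc tp_closed a_closed p_closed
      by (intro inv_solve_left[THEN iffD2]) auto
    then show ?thesis using Suc tp_closed p_closed by (simp add: m_assoc)
  qed
  then have r1: "rel m ?P (\<alpha> ?P)" using Suc by (auto simp: rel_def)
  have "rel m (\<alpha> ?P) (\<alpha> ((\<alpha> ^^ k) ?P))" using rel_a Suc tp_closed by blast
  then have "rel m ?P (\<alpha> ((\<alpha> ^^ k) ?P))" by (rule rel_trans[OF tp_closed[OF Suc.prems] r1])
  then show ?case by simp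
qed

end

lemma (in group) conj_iff: "u \<in> carrier G \<Longrightarrow> v \<in> carrier G \<Longrightarrow> c \<in> carrier G \<Longrightarrow>
  (v = c \<otimes> u \<otimes> inv c) \<longleftrightarrow> (v \<otimes> c = c \<otimes> u)"
  by (metis inv_solve_right m_closed)

theorem lemma6p2:
  fixes G :: "('a, 'b) monoid_scheme" and \<alpha> :: "'a \<Rightarrow> 'a" and x y :: 'a and m :: nat
  assumes "group G" and "finite (carrier G)"
    and "\<alpha> \<in> iso G G"
    and "x \<in> carrier G" and "y \<in> carrier G"
    and "m > 0"
  shows "(\<exists>z\<in>carrier G. twisted_prod G \<alpha> y m =
            inv\<^bsub>G\<^esub> z \<otimes>\<^bsub>G\<^esub> twisted_prod G \<alpha> x m \<otimes>\<^bsub>G\<^esub> (\<alpha> ^^ m) z)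
         \<longleftrightarrow> conjugate_in (semidirect_cyclic G \<alpha>)
               ((x, aut_pow G \<alpha> 1) [^]\<^bsub>semidirect_cyclic G \<alpha>\<^esub> m)
               ((y, aut_pow G \<alpha> 1) [^]\<^bsub>semidirect_cyclic G \<alpha>\<^esub> m)"
proof -
  interpret twc G \<alpha> using assms by (simp add: twc_def twc_axioms_def)
  interpret AG: group A by (rule A_group)
  let ?P = "twisted_prod G \<alpha> x m" and ?Q = "twisted_prod G \<alpha> y m"
  have P: "?P \<in> carrier G" and Q: "?Q \<in> carrier G" using assms tp_closed by auto
  have PA: "(?P, aut_pow G \<alpha> m) \<in> carrier A" and QA: "(?Q, aut_pow G \<alpha> m) \<in> carrier A"
    using P Q by (auto simp: A_carrier)
  have "conjugate_in A ((x, aut_pow G \<alpha> 1) [^]\<^bsub>A\<^esub> m) ((y, aut_pow G \<alpha> 1) [^]\<^bsub>A\<^esub> m)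
     \<longleftrightarrow> (\<exists>c\<in>carrier A. (?Q, aut_pow G \<alpha> m) \<otimes>\<^bsub>A\<^esub> c = c \<otimes>\<^bsub>A\<^esub> (?P, aut_pow G \<alpha> m))"
    unfolding conjugate_in_def A_pow[OF assms(4)] A_pow[OF assms(5)]
    by (intro bex_cong refl AG.conj_iff[OF PA QA])
  also have "\<dots> \<longleftrightarrow> (\<exists>z\<in>carrier G. \<exists>k. ?Q \<otimes>\<^bsub>G\<^esub> (\<alpha> ^^ m) z = z \<otimes>\<^bsub>G\<^esub> (\<alpha> ^^ k) ?P)"
  proof
    assume "\<exists>c\<in>carrier A. (?Q, aut_pow G \<alpha> m) \<otimes>\<^bsub>A\<^esub> c = c \<otimes>\<^bsub>A\<^esub> (?P, aut_pow G \<alpha> m)"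
    then obtain z k where "z \<in> carrier G"
      "(?Q, aut_pow G \<alpha> m) \<otimes>\<^bsub>A\<^esub> (z, aut_pow G \<alpha> k) = (z, aut_pow G \<alpha> k) \<otimes>\<^bsub>A\<^esub> (?P, aut_pow G \<alpha> m)"
      by (auto simp: A_carrier)
    then show "\<exists>z\<in>carrier G. \<exists>k. ?Q \<otimes>\<^bsub>G\<^esub> (\<alpha> ^^ m) z = z \<otimes>\<^bsub>G\<^esub> (\<alpha> ^^ k) ?P"
      using P by (auto simp: A_mult)
  next
    assume "\<exists>z\<in>carrier G. \<exists>k. ?Q \<otimes>\<^bsub>G\<^esub> (\<alpha> ^^ m) z = z \<otimes>\<^bsub>G\<^esub> (\<alpha> ^^ k) ?P"
    then obtain z k where z: "z \<in> carrier G" "?Q \<otimes>\<^bsub>G\<^esub> (\<alpha> ^^ m) z = z \<otimes>\<^bsub>G\<^esub> (\<alpha> ^^ k) ?P" by blast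
    have "(?Q, aut_pow G \<alpha> m) \<otimes>\<^bsub>A\<^esub> (z, aut_pow G \<alpha> k) = (z, aut_pow G \<alpha> k) \<otimes>\<^bsub>A\<^esub> (?P, aut_pow G \<alpha> m)"
      using z P by (simp add: A_mult add.commute)
    moreover have "(z, aut_pow G \<alpha> k) \<in> carrier A" using z by (auto simp: A_carrier)
    ultimately show "\<exists>c\<in>carrier A. (?Q, aut_pow G \<alpha> m) \<otimes>\<^bsub>A\<^esub> c = c \<otimes>\<^bsub>A\<^esub> (?P, aut_pow G \<alpha> m)" by blast
  qed
  also have "\<dots> \<longleftrightarrow> rel m ?P ?Q"
  proof
    assume "\<exists>z\<in>carrier G. \<exists>k. ?Q \<otimes>\<^bsub>G\<^esub> (\<alpha> ^^ m) z = z \<otimes>\<^bsub>G\<^esub> (\<alpha> ^^ k) ?P"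
    then obtain z k where z: "z \<in> carrier G" "?Q \<otimes>\<^bsub>G\<^esub> (\<alpha> ^^ m) z = z \<otimes>\<^bsub>G\<^esub> (\<alpha> ^^ k) ?P" by blast
    have qz: "?Q = inv\<^bsub>G\<^esub> (inv\<^bsub>G\<^esub> z) \<otimes>\<^bsub>G\<^esub> (\<alpha> ^^ k) ?P \<otimes>\<^bsub>G\<^esub> (\<alpha> ^^ m) (inv\<^bsub>G\<^esub> z)"
    proof -
      have "?Q = (z \<otimes>\<^bsub>G\<^esub> (\<alpha> ^^ k) ?P) \<otimes>\<^bsub>G\<^esub> inv\<^bsub>G\<^esub> ((\<alpha> ^^ m) z)"
        using z P Q p_closed by (intro inv_solve_right[THEN iffD2]) auto
      then show ?thesis using z P p_closed by (simp add: p_inv)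
    qed
    have "rel m ((\<alpha> ^^ k) ?P) ?Q" unfolding rel_def
      by (rule bexI[of _ "inv\<^bsub>G\<^esub> z"]) (rule qz, simp add: z(1))
    then show "rel m ?P ?Q" using rel_pow[of x m k] rel_trans assms P by blast
  next
    assume "rel m ?P ?Q"
    then obtain z where z: "z \<in> carrier G" "?Q = inv\<^bsub>G\<^esub> z \<otimes>\<^bsub>G\<^esub> ?P \<otimes>\<^bsub>G\<^esub> (\<alpha> ^^ m) z" by (auto simp: rel_def)
    have "?Q \<otimes>\<^bsub>G\<^esub> (\<alpha> ^^ m) (inv\<^bsub>G\<^esub> z) = inv\<^bsub>G\<^esub> z \<otimes>\<^bsub>G\<^esub> (\<alpha> ^^ 0) ?P"
      using z P p_closed by (simp add: p_inv m_assoc)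
    then show "\<exists>z\<in>carrier G. \<exists>k. ?Q \<otimes>\<^bsub>G\<^esub> (\<alpha> ^^ m) z = z \<otimes>\<^bsub>G\<^esub> (\<alpha> ^^ k) ?P" using z by blast
  qed
  finally show ?thesis by (simp add: rel_def)
qed

end
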